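(* The sequential specification $\mathsf{Mutex}$, defined by the ordered rules $R_0, R_{Lock}, R_{LU}$, is step-by-step linearizable: for every differentiated history $h$, every data value $x$, and every $i\in\{1,2,3\}$ with $(R_1,R_2,R_3)=(R_0,R_{Lock},R_{LU})$, if $h\sqsubseteq u$ for some $u\in M_x(R_i)$ and $h\setminus x\sqsubseteq[\![R_1,\dots,R_i]\!]$, then $h\sqsubseteq[\![R_1,\dots,R_i]\!]$.
   Context: Data values are natural numbers. Operations (resp. method events) are pairs of a method in $\{Lock, Unlock\}$ and a data value (a ghost parameter relating an $Unlock$ to its $Lock$). A history $h$ is a finite set of operations with a strict partial order $<_{hb}$ (happens-before) that is an interval order. A sequential execution is a finite sequence of method events. $h$ is differentiated if each data value is carried by at most one $Lock$ operation. $h\sqsubseteq u$ means there is a bijection between operations of $h$ and positions of $u$ preserving method and data value such that $o_1<_{hb}o_2$ implies the image of $o_1$ precedes that of $o_2$; $h\sqsubseteq S$ means $h\sqsubseteq u$ for some $u\in S$. $h\setminus x$ removes all operations with data value $x$. Rules: $R_0$: $\epsilon\in\mathsf{Mutex}$; $R_{Lock}$: $Lock(x)\in\mathsf{Mutex}$; $R_{LU}$: $u\in\mathsf{Mutex}\Rightarrow Lock(x)\cdot Unlock(x)\cdot u\in\mathsf{Mutex}$ ($x$ not in $u$). $[\![R_1,\dots,R_i]\!]$ is the smallest set of sequences closed under the listed rules. Matching sets with witness $x$: $M_x(R_0)=\{\epsilon\}$, $M_x(R_{Lock})=\{Lock(x)\}$, $M_x(R_{LU})$ = sequences $Lock(x)\cdot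 Unlock(x)\cdot u$ with $x$ not occurring in $u$. *)

theory Defs
  imports Main
begin

datatype meth = Lock | Unlock

type_synonym event = "meth \<times> nat"

text \<open>A history: a set of operation identifiers ops, a labelling lbl giving each
operation its method and data value, and a happens-before relation hb.\<close>

definition is_history :: "'o set \<Rightarrow> ('o \<times> 'o) set \<Rightarrow> bool" where
  "is_history ops hb \<longleftrightarrow> finite ops \<and> hb \<subseteq> ops \<times> ops \<and> irrefl hb \<and> trans hb \<and>
     (\<forall>a b c d. (a, b) \<in> hb \<longrightarrow> (c, d) \<in> hb \<longrightarrow> (a, d) \<in> hb \<or> (c, b) \<in> hb)"

definition differentiated :: "'o set \<Rightarrow> ('o \<Rightarrow> event) \<Rightarrow> bool" where
  "differentiated ops lbl \<longleftrightarrow>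
     (\<forall>o1\<in>ops. \<forall>o2\<in>ops. lbl o1 = (Lock, snd (lbl o1)) \<longrightarrow> lbl o2 = lbl o1 \<longrightarrow> o1 = o2)"

definition lin_of :: "'o set \<Rightarrow> ('o \<Rightarrow> event) \<Rightarrow> ('o \<times> 'o) set \<Rightarrow> event list \<Rightarrow> bool" where
  "lin_of ops lbl hb u \<longleftrightarrow> (\<exists>f. bij_betw f ops {..<length u} \<and>
     (\<forall>p\<in>ops. u ! f p = lbl p) \<and> (\<forall>o1 o2. (o1, o2) \<in> hb \<longrightarrow> f o1 < f o2))"

definition hist_in :: "'o set \<Rightarrow> ('o \<Rightarrow> event) \<Rightarrow> ('o \<times> 'o) set \<Rightarrow> event list set \<Rightarrow> bool" where
  "hist_in ops lbl hb S \<longleftrightarrow> (\<exists>u\<in>S. lin_of ops lbl hb u)"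

definition rem_ops :: "'o set \<Rightarrow> ('o \<Rightarrow> event) \<Rightarrow> nat \<Rightarrow> 'o set" where
  "rem_ops ops lbl x = {p \<in> ops. snd (lbl p) \<noteq> x}"

definition rem_hb :: "'o set \<Rightarrow> ('o \<Rightarrow> event) \<Rightarrow> ('o \<times> 'o) set \<Rightarrow> nat \<Rightarrow> ('o \<times> 'o) set" where
  "rem_hb ops lbl hb x = hb \<inter> (rem_ops ops lbl x \<times> rem_ops ops lbl x)"

datatype rule = R0 | RLock | RLU

definition vals :: "event list \<Rightarrow> nat set" where
  "vals u = snd ` set u"

inductive_set gen :: "rule list \<Rightarrow> event list set" for rs :: "rule list" where
  g0: "R0 \<in> set rs \<Longrightarrow> [] \<in> gen rs"
| gLock: "RLock \<in> set rs \<Longrightarrow> [(Lock, x)] \<in> gen rs"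
| gLU: "RLU \<in> set rs \<Longrightarrow> u \<in> gen rs \<Longrightarrow> x \<notin> vals u \<Longrightarrow> (Lock, x) # (Unlock, x) # u \<in> gen rs"

definition mutex_rules :: "rule list" where
  "mutex_rules = [R0, RLock, RLU]"

fun matching :: "nat \<Rightarrow> rule \<Rightarrow> event list set" where
  "matching x R0 = {[]}"
| "matching x RLock = {[(Lock, x)]}"
| "matching x RLU = {(Lock, x) # (Unlock, x) # u | u. x \<notin> vals u}"

end

theory Submission
  imports Defs
begin

lemma case3:
  fixes ops :: "'o set" and lbl :: "'o \<Rightarrow> event" and hb :: "('o \<times> 'o) set"
  assumes H: "is_history ops hb"
    and U: "x \<notin> vals u" "lin_of ops lbl hb ((Lock, x) # (Unlock, x) # u)"
    and V: "v \<in> gen rs" "RLU \<in> set rs" "lin_of (rem_ops ops lbl x) lbl (rem_hb ops lbl hb x) v"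
  shows "hist_in ops lbl hb (gen rs)"
proof -
  let ?u0 = "(Lock, x) # (Unlock, x) # u"
  obtain f0 where f0b: "bij_betw f0 ops {..<length ?u0}" and f0l: "\<forall>p\<in>ops. ?u0 ! f0 p = lbl p"
    and f0h: "\<forall>o1 o2. (o1, o2) \<in> hb \<longrightarrow> f0 o1 < f0 o2"
    using U(2) unfolding lin_of_def by blast
  obtain f1 where f1b: "bij_betw f1 (rem_ops ops lbl x) {..<length v}"
    and f1l: "\<forall>p\<in>rem_ops ops lbl x. v ! f1 p = lbl p"
    and f1h: "\<forall>o1 o2. (o1, o2) \<in> rem_hb ops lbl hb x \<longrightarrow> f1 o1 < f1 o2"
    using V(3) unfolding lin_of_def by blast
  have hbops: "hb \<subseteq> ops \<times> ops" using H unfolding is_history_def by blast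
  have xv: "x \<notin> vals v"
  proof
    assume "x \<in> vals v"
    then obtain k where k: "k < length v" "snd (v ! k) = x"
      unfolding vals_def by (auto simp: in_set_conv_nth)
    then obtain p where "p \<in> rem_ops ops lbl x" "f1 p = k"
      using f1b by (metis bij_betw_def imageE lessThan_iff)
    thus False using f1l k unfolding rem_ops_def by auto
  qed
  have w: "(Lock, x) # (Unlock, x) # v \<in> gen rs" by (rule gen.gLU[OF V(2) V(1) xv])
  have key: "\<And>p. p \<in> ops \<Longrightarrow> snd (lbl p) = x \<longleftrightarrow> f0 p < 2"
  proof -
    fix p assume p: "p \<in> ops"
    have lt: "f0 p < length ?u0" using f0b p by (auto simp: bij_betw_def)
    show "snd (lbl p) = x \<longleftrightarrow> f0 p < 2"
    proof
      assume "snd (lbl p) = x"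
      show "f0 p < 2"
      proof (rule ccontr)
        assume "\<not> f0 p < 2"
        then have "?u0 ! f0 p = u ! (f0 p - 2)" "f0 p - 2 < length u" using lt
          by (auto simp: nth_Cons split: nat.splits)
        then have "x \<in> vals u" using f0l p \<open>snd (lbl p) = x\<close> unfolding vals_def
          by (metis image_eqI nth_mem)
        thus False using U(1) by blast
      qed
    next
      assume "f0 p < 2"
      then have "f0 p = 0 \<or> f0 p = 1" by auto
      thus "snd (lbl p) = x" using f0l p by (metis nth_Cons_0 nth_Cons_Suc One_nat_def snd_conv)
    qed
  qed
  define g where "g p = (if snd (lbl p) = x then f0 p else f1 p + 2)" for p
  have inj0: "inj_on f0 ops" using f0b by (auto simp: bij_betw_def)
  have inj1: "inj_on f1 (rem_ops ops lbl x)" using f1b by (auto simp: bij_betw_def)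
  let ?w = "(Lock, x) # (Unlock, x) # v"
  have "inj_on g ops"
  proof (rule inj_onI)
    fix p q assume pq: "p \<in> ops" "q \<in> ops" "g p = g q"
    show "p = q"
    proof (cases "snd (lbl p) = x"; cases "snd (lbl q) = x")
      assume "snd (lbl p) = x" "snd (lbl q) = x"
      thus ?thesis using pq inj0 unfolding g_def by (auto dest: inj_onD)
    next
      assume "snd (lbl p) = x" "snd (lbl q) \<noteq> x"
      thus ?thesis using pq key unfolding g_def by auto
    next
      assume "snd (lbl p) \<noteq> x" "snd (lbl q) = x"
      thus ?thesis using pq key unfolding g_def by force
    next
      assume "snd (lbl p) \<noteq> x" "snd (lbl q) \<noteq> x"
      thus ?thesis using pq inj1 unfolding g_def rem_ops_def by (auto dest: inj_onD)
    qed
  qed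
  moreover have "g ` ops = {..<length ?w}"
  proof (rule set_eqI, rule iffI)
    fix k assume "k \<in> g ` ops"
    then obtain p where p: "p \<in> ops" "k = g p" by blast
    show "k \<in> {..<length ?w}"
    proof (cases "snd (lbl p) = x")
      case True thus ?thesis using key p unfolding g_def by auto
    next
      case False
      then have "p \<in> rem_ops ops lbl x" using p unfolding rem_ops_def by auto
      then have "f1 p < length v" using f1b by (auto simp: bij_betw_def)
      thus ?thesis using False p unfolding g_def by auto
    qed
  next
    fix k assume k: "k \<in> {..<length ?w}"
    show "k \<in> g ` ops"
    proof (cases "k < 2")
      case True
      then have "k \<in> {..<length ?u0}" by auto
      then obtain p where p: "p \<in> ops" "f0 p = k" using f0b by (metis bij_betw_def imageE)
      thus ?thesis using key True unfolding g_def by force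
    next
      case False
      then have "k - 2 \<in> {..<length v}" using k by auto
      then obtain p where p: "p \<in> rem_ops ops lbl x" "f1 p = k - 2" using f1b
        by (metis bij_betw_def imageE)
      then have "g p = k" "p \<in> ops" using False unfolding g_def rem_ops_def by auto
      thus ?thesis by force
    qed
  qed
  ultimately have gb: "bij_betw g ops {..<length ?w}" by (simp add: bij_betw_def)
  have gl: "\<forall>p\<in>ops. ?w ! g p = lbl p"
  proof
    fix p assume p: "p \<in> ops"
    show "?w ! g p = lbl p"
    proof (cases "snd (lbl p) = x")
      case True
      then have "f0 p = 0 \<or> f0 p = 1" using key p by auto
      then show ?thesis using f0l p True unfolding g_def by auto
    next
      case False
      then have "p \<in> rem_ops ops lbl x" using p unfolding rem_ops_def by auto
      thus ?thesis using f1l False unfolding g_def by auto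
    qed
  qed
  have gh: "\<forall>o1 o2. (o1, o2) \<in> hb \<longrightarrow> g o1 < g o2"
  proof (intro allI impI)
    fix p q assume pq: "(p, q) \<in> hb"
    then have ops: "p \<in> ops" "q \<in> ops" using hbops by auto
    have lt: "f0 p < f0 q" using f0h pq by auto
    show "g p < g q"
    proof (cases "snd (lbl p) = x"; cases "snd (lbl q) = x")
      assume "snd (lbl p) = x" "snd (lbl q) = x"
      thus ?thesis using lt unfolding g_def by auto
    next
      assume "snd (lbl p) = x" "snd (lbl q) \<noteq> x"
      thus ?thesis using key ops unfolding g_def by auto
    next
      assume "snd (lbl p) \<noteq> x" "snd (lbl q) = x"
      thus ?thesis using key ops lt by auto
    next
      assume a: "snd (lbl p) \<noteq> x" "snd (lbl q) \<noteq> x"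
      then have "(p, q) \<in> rem_hb ops lbl hb x" using pq ops
        unfolding rem_hb_def rem_ops_def by auto
      thus ?thesis using f1h a unfolding g_def by auto
    qed
  qed
  have "lin_of ops lbl hb ?w" unfolding lin_of_def using gb gl gh by blast
  thus ?thesis using w unfolding hist_in_def by blast
qed

theorem mainTheorem3:
  fixes ops :: "'o set" and lbl :: "'o \<Rightarrow> event" and hb :: "('o \<times> 'o) set"
    and x :: nat and i :: nat
  assumes "is_history ops hb"
    and "differentiated ops lbl"
    and "i \<in> {1, 2, 3}"
    and "\<exists>u \<in> matching x (mutex_rules ! (i - 1)). lin_of ops lbl hb u"
    and "hist_in (rem_ops ops lbl x) lbl (rem_hb ops lbl hb x) (gen (take i mutex_rules))"
  shows "hist_in ops lbl hb (gen (take i mutex_rules))"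
proof -
  consider "i = 1" | "i = 2" | "i = 3" using assms(3) by auto
  then show ?thesis
  proof cases
    case 1
    then have "lin_of ops lbl hb []" using assms(4) by (simp add: mutex_rules_def)
    moreover have "[] \<in> gen (take i mutex_rules)" using 1 by (simp add: mutex_rules_def gen.g0)
    ultimately show ?thesis unfolding hist_in_def by blast
  next
    case 2
    then have "lin_of ops lbl hb [(Lock, x)]" using assms(4) by (simp add: mutex_rules_def)
    moreover have "[(Lock, x)] \<in> gen (take i mutex_rules)" using 2
      by (simp add: mutex_rules_def gen.gLock)
    ultimately show ?thesis unfolding hist_in_def by blast
  next
    case 3
    then obtain u where u: "x \<notin> vals u" "lin_of ops lbl hb ((Lock, x) # (Unlock, x) # u)"
      using assms(4) by (auto simp: mutex_rules_def)
    obtain v where v: "v \<in> gen (take i mutex_rules)"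
      "lin_of (rem_ops ops lbl x) lbl (rem_hb ops lbl hb x) v"
      using assms(5) unfolding hist_in_def by blast
    have "RLU \<in> set (take i mutex_rules)" using 3 by (simp add: mutex_rules_def)
    thus ?thesis using case3[OF assms(1) u v(1) _ v(2)] by blast
  qed
qed

end
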